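(* Let $n\ge1$, $a,\omega,\varphi\in\mathbb{R}^n$, $b\in\mathbb{R}$, and $h(x)=\sin\Big(\sum_{i=1}^n a_i\sin(\omega_ix+\varphi_i)+b\Big)$. For $\mathbf{k}\in\mathbb{Z}^n$ let $\alpha_{\mathbf{k}}(a)=\prod_{i=1}^n J_{k_i}(a_i)$, $\langle \mathbf{k},\omega\rangle=\sum_i k_i\omega_i$, $\langle \mathbf{k},\varphi\rangle=\sum_i k_i\varphi_i$. Then for every $x\in\mathbb{R}$, $$h(x)=\sum_{\mathbf{k}\in\mathbb{Z}^n}A_{\mathbf{k}}\cos\big(\langle\mathbf{k},\omega\rangle x\big)+B_{\mathbf{k}}\sin\big(\langle\mathbf{k},\omega\rangle x\big),$$ with $A_{\mathbf{k}}=\alpha_{\mathbf{k}}(a)\sin(\langle\mathbf{k},\varphi\rangle+b)$ and $B_{\mathbf{k}}=\alpha_{\mathbf{k}}(a)\cos(\langle\mathbf{k},\varphi\rangle+b)$. Moreover, $$h(x)=\sum_{\mathbf{k}\in\mathbb{Z}^n}c_{\mathbf{k}}\,e^{i\langle\mathbf{k},\omega\rangle x},\qquad c_{\mathbf{k}}=-\,i\,\alpha_{\mathbf{k}}(a)\,e^{i\langle\mathbf{k},\varphi\rangle}\left(\frac{e^{ib}-(-1)^{\sum_j k_j}e^{-ib}}{2}\right).$$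
   Context: $J_k$ denotes the Bessel function of the first kind of integer order $k$; $i$ in the exponential form is the imaginary unit. *)

theory Defs
  imports "HOL-Analysis.Analysis"
begin

definition bessel_J_nat :: "nat \<Rightarrow> real \<Rightarrow> real" where
  "bessel_J_nat k x = (\<Sum>m. (-1) ^ m / (fact m * fact (m + k)) * (x / 2) ^ (2 * m + k))"

definition bessel_J :: "int \<Rightarrow> real \<Rightarrow> real" where
  "bessel_J k x = (if 0 \<le> k then bessel_J_nat (nat k) x
                   else (-1) ^ nat (- k) * bessel_J_nat (nat (- k)) x)"

end

theory Submission
  imports Defs
begin

lemma exp_has_sum:
  fixes z :: complex
  shows "((\<lambda>n. z^n / fact n) has_sum exp z) UNIV"
proof (rule norm_summable_imp_has_sum)
  have "summable (\<lambda>n. inverse (fact n) * norm z ^ n)" by (rule summable_exp)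
  then show "summable (\<lambda>n. norm (z^n / fact n))"
    by (simp add: norm_divide norm_power field_simps)
  show "(\<lambda>n. z^n / fact n) sums exp z"
    using exp_converges[of z] by (simp add: scaleR_conv_of_real field_simps)
qed

lemma has_sum_times_complex:
  fixes a :: "'a \<Rightarrow> complex" and b :: "'b \<Rightarrow> complex"
  assumes ha: "(a has_sum A) UNIV" and hb: "(b has_sum B) UNIV"
  shows "((\<lambda>(p,m). a p * b m) has_sum (A * B)) UNIV"
proof -
  have sa: "(\<lambda>x. norm (a x)) summable_on UNIV"
    using ha summable_on_iff_abs_summable_on_complex has_sum_imp_summable by blast
  have sb: "(\<lambda>x. norm (b x)) summable_on UNIV"
    using hb summable_on_iff_abs_summable_on_complex has_sum_imp_summable by blast
  have inner: "((\<lambda>m. a p * b m) has_sum (a p * B)) UNIV" for p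
    using has_sum_cmult_right[OF hb] by simp
  have outer: "((\<lambda>p. a p * B) has_sum (A * B)) UNIV"
    using has_sum_cmult_left[OF ha] by simp
  have "(\<lambda>x. norm ((\<lambda>(p,m). a p * b m) x)) summable_on Sigma UNIV (\<lambda>_. UNIV)"
  proof (rule Infinite_Sum.abs_summable_on_Sigma_iff[where f="\<lambda>(p,m). a p * b m" and A=UNIV and B="\<lambda>_. UNIV", THEN iffD2], intro conjI ballI)
    fix p show "(\<lambda>y. norm (case (p, y) of (p, m) \<Rightarrow> a p * b m)) summable_on UNIV"
      using summable_on_cmult_right[OF sb, of "norm (a p)"] by (simp add: norm_mult)
  next
    have "(\<lambda>p. norm (a p) * infsum (\<lambda>m. norm (b m)) UNIV) summable_on UNIV"
      using summable_on_cmult_left[OF sa] by simp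
    moreover have "infsum (\<lambda>y. norm (case (p, y) of (p, m) \<Rightarrow> a p * b m)) UNIV
        = norm (a p) * infsum (\<lambda>m. norm (b m)) UNIV" for p
      by (simp add: norm_mult infsum_cmult_right')
    ultimately show "(\<lambda>x. norm (infsum (\<lambda>y. norm (case (x, y) of (p, m) \<Rightarrow> a p * b m)) UNIV)) summable_on UNIV"
      by (simp add: infsum_nonneg)
  qed
  then have "(\<lambda>(p,m). a p * b m) summable_on Sigma UNIV (\<lambda>_. UNIV)"
    by (rule abs_summable_summable)
  then have "((\<lambda>(p,m). a p * b m) has_sum (A * B)) (Sigma UNIV (\<lambda>_. UNIV))"
    by (intro has_sum_SigmaI[OF _ outer]) (use inner in auto)
  then show ?thesis by simp
qed


definition bc :: "real \<Rightarrow> nat \<Rightarrow> nat \<Rightarrow> real" where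
  "bc x k j = (-1) ^ j / (fact j * fact (j + k)) * (x / 2) ^ (2 * j + k)"

lemma bc_has_sum: "(bc x k has_sum bessel_J_nat k x) UNIV"
proof (rule norm_summable_imp_has_sum)
  have s: "summable (\<lambda>j. \<bar>x/2\<bar>^k * (inverse (fact j) * (\<bar>x/2\<bar>^2) ^ j))"
    by (intro summable_mult summable_exp)
  have le: "norm (bc x k j) \<le> \<bar>x/2\<bar>^k * (inverse (fact j) * (\<bar>x/2\<bar>^2) ^ j)" for j
  proof -
    have f1: "(1::real) \<le> fact (j + k)" by simp
    have "norm (bc x k j) = \<bar>x/2\<bar>^k * (\<bar>x/2\<bar>^2)^j / (fact j * fact (j+k))"
      by (simp add: bc_def abs_mult power_abs power_add power_mult abs_divide)
    also have "\<dots> \<le> \<bar>x/2\<bar>^k * (\<bar>x/2\<bar>^2)^j / (fact j * 1)"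
      by (intro divide_left_mono mult_left_mono f1) auto
    finally show ?thesis by (simp add: field_simps)
  qed
  show sn: "summable (\<lambda>j. norm (bc x k j))"
    by (rule summable_comparison_test[OF _ s]) (use le in auto)
  show "bc x k sums bessel_J_nat k x"
    unfolding bessel_J_nat_def bc_def[symmetric]
    by (rule summable_sums, rule summable_norm_cancel[OF sn])
qed


definition psi :: "int \<times> nat \<Rightarrow> nat \<times> nat" where
  "psi = (\<lambda>(k,j). if 0 \<le> k then (j + nat k, j) else (j, j + nat (- k)))"

lemma bij_psi: "bij_betw psi UNIV UNIV"
  by (rule bij_betwI[where g="\<lambda>(p,m). (int p - int m, min p m)"]) (auto simp: psi_def split: if_splits)

lemma jacobi_anger:
  fixes x \<theta> :: real
  shows "((\<lambda>k::int. complex_of_real (bessel_J k x) * exp (\<i> * (of_int k * complex_of_real \<theta>)))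
           has_sum exp (\<i> * complex_of_real (x * sin \<theta>))) UNIV"
proof -
  define u where "u = exp (\<i> * complex_of_real \<theta>)"
  define v where "v = exp (- (\<i> * complex_of_real \<theta>))"
  define a where "a = complex_of_real (x / 2)"
  have uv: "u * v = 1" unfolding u_def v_def by (simp add: exp_minus_inverse)
  define g where "g = (\<lambda>(p::nat,m::nat). (a * u)^p / fact p * ((- a * v)^m / fact m))"
  have hg: "(g has_sum (exp (a * u) * exp (- a * v))) UNIV"
    unfolding g_def by (rule has_sum_times_complex[OF exp_has_sum exp_has_sum])
  have E: "exp (a * u) * exp (- a * v) = exp (\<i> * complex_of_real (x * sin \<theta>))"
  proof -
    have "sin (complex_of_real \<theta>) = (u - v) / (2 * \<i>)"
      unfolding u_def v_def by (rule sin_exp_eq)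
    then have "u - v = 2 * \<i> * complex_of_real (sin \<theta>)"
      by (simp add: sin_of_real field_simps)
    then have "a * u + - a * v = \<i> * complex_of_real (x * sin \<theta>)"
      unfolding a_def by (simp add: algebra_simps)
    then show ?thesis by (simp add: exp_add[symmetric])
  qed
  have hg2: "((g \<circ> psi) has_sum exp (\<i> * complex_of_real (x * sin \<theta>))) (Sigma UNIV (\<lambda>_. UNIV))"
    using hg E has_sum_reindex_bij_betw[OF bij_psi, of g] by (simp add: o_def)
  show ?thesis
  proof (rule has_sum_Sigma'[OF hg2])
    fix k :: int
    assume "k \<in> UNIV"
    show "((\<lambda>j. (g \<circ> psi) (k, j)) has_sum
            complex_of_real (bessel_J k x) * exp (\<i> * (of_int k * complex_of_real \<theta>))) UNIV"
    proof (cases "0 \<le> k")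
      case True
      define n where "n = nat k"
      have k: "k = int n" using True n_def by simp
      have eq: "(g \<circ> psi) (k, j) = complex_of_real (bc x n j) * u ^ n" for j
      proof -
        have "(g \<circ> psi) (k, j) = (a * u)^(j+n) / fact (j+n) * ((- a * v)^j / fact j)"
          using True by (simp add: g_def psi_def n_def)
        also have "\<dots> = (-1)^j / (fact j * fact (j+n)) * a^(2*j+n) * (u * v)^j * u^n"
          by (simp add: power_add power_mult_distrib power_mult field_simps power2_eq_square power_minus[of "a * v"])
        also have "\<dots> = complex_of_real (bc x n j) * u ^ n"
          by (simp add: uv bc_def a_def)
        finally show ?thesis .
      qed
      have "((\<lambda>j. complex_of_real (bc x n j) * u ^ n) has_sum
              complex_of_real (bessel_J_nat n x) * u ^ n) UNIV"
        by (intro has_sum_cmult_left has_sum_of_real bc_has_sum)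
      moreover have "u ^ n = exp (\<i> * (of_int k * complex_of_real \<theta>))"
        unfolding u_def k by (simp add: exp_of_nat_mult[symmetric] mult_ac)
      moreover have "bessel_J k x = bessel_J_nat n x" using True by (simp add: bessel_J_def n_def)
      ultimately show ?thesis using eq by simp
    next
      case False
      define n where "n = nat (- k)"
      have k: "k = - int n" using False n_def by simp
      have eq: "(g \<circ> psi) (k, j) = complex_of_real ((-1)^n * bc x n j) * v ^ n" for j
      proof -
        have "(g \<circ> psi) (k, j) = (a * u)^j / fact j * ((- a * v)^(j+n) / fact (j+n))"
          using False by (simp add: g_def psi_def n_def)
        also have "\<dots> = (-1)^n * ((-1)^j / (fact j * fact (j+n)) * a^(2*j+n) * (u * v)^j * v^n)"
          by (simp add: power_add power_mult_distrib power_mult field_simps power2_eq_square power_minus[of "a * v"])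
        also have "\<dots> = complex_of_real ((-1)^n * bc x n j) * v ^ n"
          by (simp add: uv bc_def a_def)
        finally show ?thesis .
      qed
      have "((\<lambda>j. complex_of_real ((-1)^n * bc x n j) * v ^ n) has_sum
              complex_of_real ((-1)^n * bessel_J_nat n x) * v ^ n) UNIV"
        by (intro has_sum_cmult_left has_sum_of_real has_sum_cmult_right bc_has_sum)
      moreover have "v ^ n = exp (\<i> * (of_int k * complex_of_real \<theta>))"
        unfolding v_def k by (simp add: exp_of_nat_mult[symmetric] mult_ac)
      moreover have "bessel_J k x = (-1)^n * bessel_J_nat n x" using False by (simp add: bessel_J_def n_def)
      ultimately show ?thesis using eq by simp
    qed
  qed
qed


lemma pm_one_add: "(-1::real) ^ nat \<bar>p + q\<bar> = (-1) ^ nat \<bar>p\<bar> * (-1) ^ nat \<bar>q\<bar>"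
proof -
  have e: "(-1::real) ^ nat \<bar>m\<bar> = (if even m then 1 else -1)" for m :: int
    by (simp add: even_nat_iff)
  show ?thesis unfolding e by auto
qed

lemma pm_one_sum: "finite A \<Longrightarrow> (\<Prod>i\<in>A. (-1::real) ^ nat \<bar>f i\<bar>) = (-1) ^ nat \<bar>\<Sum>i\<in>A. f i\<bar>"
  by (induction A rule: finite_induct) (auto simp: pm_one_add)

lemma bessel_J_neg: "bessel_J (- m) y = (-1) ^ nat \<bar>m\<bar> * bessel_J m y"
  by (auto simp: bessel_J_def)

lemma bij_vec_nth: "bij_betw (vec_nth :: 'a ^ 'n \<Rightarrow> 'n \<Rightarrow> 'a) UNIV UNIV"
  by (rule bij_betwI[where g=vec_lambda]) auto

lemma bij_uminus_vec: "bij_betw (uminus :: int ^ 'n \<Rightarrow> int ^ 'n) UNIV UNIV"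
  by (rule bij_betwI[where g=uminus]) auto


theorem corollary1:
  fixes a \<omega> \<phi> :: "real ^ 'n" and b :: real and h :: "real \<Rightarrow> real"
    and \<alpha> :: "int ^ 'n \<Rightarrow> real" and kw kp :: "int ^ 'n \<Rightarrow> real"
  assumes h_def: "\<And>x. h x = sin ((\<Sum>i\<in>UNIV. a $ i * sin (\<omega> $ i * x + \<phi> $ i)) + b)"
    and \<alpha>_def: "\<And>k. \<alpha> k = (\<Prod>i\<in>UNIV. bessel_J (k $ i) (a $ i))"
    and kw_def: "\<And>k. kw k = (\<Sum>i\<in>UNIV. of_int (k $ i) * \<omega> $ i)"
    and kp_def: "\<And>k. kp k = (\<Sum>i\<in>UNIV. of_int (k $ i) * \<phi> $ i)"
  shows "\<forall>x::real.
     ((\<lambda>k. \<alpha> k * sin (kp k + b) * cos (kw k * x) + \<alpha> k * cos (kp k + b) * sin (kw k * x))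
        has_sum h x) UNIV
   \<and> ((\<lambda>k. (- \<i> * complex_of_real (\<alpha> k) * exp (\<i> * complex_of_real (kp k))
             * ((exp (\<i> * complex_of_real b)
                 - (-1) ^ nat \<bar>\<Sum>j\<in>UNIV. k $ j\<bar> * exp (- \<i> * complex_of_real b)) / 2))
             * exp (\<i> * complex_of_real (kw k * x)))
        has_sum complex_of_real (h x)) UNIV"
proof
  fix x :: real
  define \<theta> where "\<theta> i = \<omega> $ i * x + \<phi> $ i" for i
  define S where "S = (\<Sum>i\<in>UNIV. a $ i * sin (\<theta> i))"
  define f where "f i k = complex_of_real (bessel_J k (a $ i)) * exp (\<i> * (of_int k * complex_of_real (\<theta> i)))" for i k
  define e where "e i = exp (\<i> * complex_of_real (a $ i * sin (\<theta> i)))" for i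
  have hf: "(f i has_sum e i) UNIV" for i
    unfolding f_def e_def by (rule jacobi_anger)
  have af: "Infinite_Sum.abs_summable_on (f i) UNIV" for i
    using hf summable_on_iff_abs_summable_on_complex has_sum_imp_summable by blast
  have "Infinite_Set_Sum.abs_summable_on (\<lambda>g. \<Prod>i\<in>UNIV. f i (g i)) (PiE UNIV (\<lambda>_. UNIV))"
    by (rule abs_summable_on_prod_PiE) (use af abs_summable_equivalent in auto)
  then have "(\<lambda>g. \<Prod>i\<in>UNIV. f i (g i)) summable_on (PiE UNIV (\<lambda>_. UNIV))"
    using abs_summable_equivalent abs_summable_summable by blast
  moreover have "infsum (\<lambda>g. \<Prod>i\<in>UNIV. f i (g i)) (PiE UNIV (\<lambda>_. UNIV)) = (\<Prod>i\<in>UNIV. e i)"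
  proof -
    have "infsum (f i) UNIV = e i" for i using hf[of i] by (rule infsumI)
    then show ?thesis using infsum_prod_PiE_abs[of UNIV f "\<lambda>_. UNIV"] af by simp
  qed
  ultimately have P0: "((\<lambda>g. \<Prod>i\<in>UNIV. f i (g i)) has_sum (\<Prod>i\<in>UNIV. e i)) UNIV"
    using has_sum_infsum by fastforce
  define F where "F k = complex_of_real (\<alpha> k) * exp (\<i> * complex_of_real (kp k)) * exp (\<i> * complex_of_real (kw k * x))" for k
  have Fk: "(\<Prod>i\<in>UNIV. f i (k $ i)) = F k" for k
  proof -
    have "(\<Prod>i\<in>UNIV. f i (k $ i)) = complex_of_real (\<alpha> k) * exp (\<Sum>i\<in>UNIV. \<i> * (of_int (k $ i) * complex_of_real (\<theta> i)))"
      by (simp add: f_def prod.distrib \<alpha>_def exp_sum)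
    also have "(\<Sum>i\<in>UNIV. \<i> * (of_int (k $ i) * complex_of_real (\<theta> i))) = \<i> * complex_of_real (kp k) + \<i> * complex_of_real (kw k * x)"
      by (simp add: kp_def kw_def \<theta>_def sum_distrib_left sum_distrib_right sum.distrib[symmetric] algebra_simps)
    finally show ?thesis by (simp add: F_def exp_add)
  qed
  have Pe: "(\<Prod>i\<in>UNIV. e i) = exp (\<i> * complex_of_real S)"
    by (simp add: e_def S_def exp_sum[symmetric] sum_distrib_left)
  have HF: "(F has_sum exp (\<i> * complex_of_real S)) UNIV"
    using P0 has_sum_reindex_bij_betw[OF bij_vec_nth, of "\<lambda>g. \<Prod>i\<in>UNIV. f i (g i)"] Fk Pe
    by simp
  have hx: "h x = sin (S + b)" by (simp add: h_def S_def \<theta>_def)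
  show "((\<lambda>k. \<alpha> k * sin (kp k + b) * cos (kw k * x) + \<alpha> k * cos (kp k + b) * sin (kw k * x))
        has_sum h x) UNIV
   \<and> ((\<lambda>k. (- \<i> * complex_of_real (\<alpha> k) * exp (\<i> * complex_of_real (kp k))
             * ((exp (\<i> * complex_of_real b)
                 - (-1) ^ nat \<bar>\<Sum>j\<in>UNIV. k $ j\<bar> * exp (- \<i> * complex_of_real b)) / 2))
             * exp (\<i> * complex_of_real (kw k * x)))
        has_sum complex_of_real (h x)) UNIV"
  proof
    have "((\<lambda>k. Im (exp (\<i> * complex_of_real b) * F k)) has_sum Im (exp (\<i> * complex_of_real b) * exp (\<i> * complex_of_real S))) UNIV"
      by (intro has_sum_Im has_sum_cmult_right HF)
    moreover have "Im (exp (\<i> * complex_of_real b) * F k) = \<alpha> k * sin (kp k + b) * cos (kw k * x) + \<alpha> k * cos (kp k + b) * sin (kw k * x)" for k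
    proof -
      have Fc: "F k = complex_of_real (\<alpha> k) * cis (kp k + kw k * x)"
        by (simp add: F_def cis_conv_exp distrib_left exp_add)
      have "exp (\<i> * complex_of_real b) * F k = complex_of_real (\<alpha> k) * cis (b + (kp k + kw k * x))"
        unfolding Fc cis_conv_exp[symmetric] by (simp add: cis_mult[symmetric])
      then have "Im (exp (\<i> * complex_of_real b) * F k) = \<alpha> k * sin (b + (kp k + kw k * x))"
        by simp
      also have "b + (kp k + kw k * x) = (kp k + b) + kw k * x" by simp
      also have "sin ((kp k + b) + kw k * x) = sin (kp k + b) * cos (kw k * x) + cos (kp k + b) * sin (kw k * x)"
        by (rule sin_add)
      also have "\<alpha> k * (sin (kp k + b) * cos (kw k * x) + cos (kp k + b) * sin (kw k * x)) = \<alpha> k * sin (kp k + b) * cos (kw k * x) + \<alpha> k * cos (kp k + b) * sin (kw k * x)"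
        by (simp add: algebra_simps)
      finally show ?thesis .
    qed
    moreover have "Im (exp (\<i> * complex_of_real b) * exp (\<i> * complex_of_real S)) = h x"
      by (simp add: hx cis_conv_exp[symmetric] cis_mult add.commute)
    ultimately show "((\<lambda>k. \<alpha> k * sin (kp k + b) * cos (kw k * x) + \<alpha> k * cos (kp k + b) * sin (kw k * x))
        has_sum h x) UNIV" by simp
  next
    define \<sigma> where "\<sigma> k = (-1::real) ^ nat \<bar>\<Sum>j\<in>UNIV. k $ j\<bar>" for k :: "int ^ 'n"
    have HG0: "((\<lambda>k. cnj (F k)) has_sum cnj (exp (\<i> * complex_of_real S))) UNIV"
      using HF by simp
    have HG1: "((\<lambda>k. cnj (F (- k))) has_sum exp (- \<i> * complex_of_real S)) UNIV"
      using HG0 has_sum_reindex_bij_betw[OF bij_uminus_vec, of "\<lambda>k. cnj (F k)"]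
      by (simp add: exp_cnj)
    have al: "\<alpha> (- k) = \<sigma> k * \<alpha> k" for k
      by (simp add: \<alpha>_def \<sigma>_def bessel_J_neg prod.distrib pm_one_sum)
    have Gk: "cnj (F (- k)) = complex_of_real (\<sigma> k) * F k" for k
      by (simp add: F_def al exp_cnj kw_def kp_def sum_negf)
    have HG: "((\<lambda>k. complex_of_real (\<sigma> k) * F k) has_sum exp (- \<i> * complex_of_real S)) UNIV"
      using HG1 Gk by simp
    have H1: "((\<lambda>k. (- \<i> / 2) * (exp (\<i> * complex_of_real b) * F k + - (exp (- \<i> * complex_of_real b) * (complex_of_real (\<sigma> k) * F k))))
       has_sum (- \<i> / 2) * (exp (\<i> * complex_of_real b) * exp (\<i> * complex_of_real S) + - (exp (- \<i> * complex_of_real b) * exp (- \<i> * complex_of_real S)))) UNIV"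
      by (intro has_sum_cmult_right has_sum_add has_sum_uminusI HF HG)
    moreover have E2: "(- \<i> / 2) * (exp (\<i> * complex_of_real b) * exp (\<i> * complex_of_real S) + - (exp (- \<i> * complex_of_real b) * exp (- \<i> * complex_of_real S)))
        = complex_of_real (h x)"
    proof -
      have "complex_of_real (h x) = sin (complex_of_real (S + b))" unfolding hx by (rule sin_of_real[symmetric])
      also have "\<dots> = \<i> * (exp (- (\<i> * complex_of_real (S + b))) - exp (\<i> * complex_of_real (S + b))) / 2"
        by (rule sin_exp_eq')
      finally show ?thesis by (simp add: exp_add[symmetric] algebra_simps)
    qed
    moreover have E3: "(- \<i> / 2) * (exp (\<i> * complex_of_real b) * F k + - (exp (- \<i> * complex_of_real b) * (complex_of_real (\<sigma> k) * F k)))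
       = (- \<i> * complex_of_real (\<alpha> k) * exp (\<i> * complex_of_real (kp k))
             * ((exp (\<i> * complex_of_real b)
                 - (-1) ^ nat \<bar>\<Sum>j\<in>UNIV. k $ j\<bar> * exp (- \<i> * complex_of_real b)) / 2))
             * exp (\<i> * complex_of_real (kw k * x))" for k
      by (simp add: F_def \<sigma>_def algebra_simps)
    ultimately show "((\<lambda>k. (- \<i> * complex_of_real (\<alpha> k) * exp (\<i> * complex_of_real (kp k))
             * ((exp (\<i> * complex_of_real b)
                 - (-1) ^ nat \<bar>\<Sum>j\<in>UNIV. k $ j\<bar> * exp (- \<i> * complex_of_real b)) / 2))
             * exp (\<i> * complex_of_real (kw k * x)))
        has_sum complex_of_real (h x)) UNIV" using H1 by (simp only: E2 E3)
  qed
qed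

end
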